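(* Let $T$ be a shifted semistandard tableau of skew shape $\nu/\mu$. Then, throughout the mixed rectification of $T$, no low entry $\underline{y}$ occupies a diagonal cell.
   Context: Letters are low letters $\underline{i}$ and high letters $\overline{\imath}$ ($i$ a positive integer), totally ordered by $\underline{1}<\overline{1}<\underline{2}<\overline{2}<\underline{3}<\cdots$; a bold $\mathbf{y}$ denotes a letter of either type with underlying integer $y$. Strict partitions are drawn as shifted Young diagrams in English convention (row $i$ occupies columns $i,\dots,i+\nu_i-1$); the diagonal cells are those in positions $(i,i)$. A shifted semistandard tableau of skew shape $\nu/\mu$ is a filling of the cells of $\nu$ not in $\mu$ such that rows and columns weakly increase, no low entry is in a diagonal cell, each column contains at most one $\overline{\imath}$ for each $i$, and each row contains at most one $\underline{j}$ for each $j$. Mixed rectification of $T$: place a bullet $\bullet$ in each cell of the bottom row of $\mu$. An entry $\mathbf{y}$ in a cell $\mathsf{b}$ is available if the cell directly above $\mathsf{b}$ or directly left of $\mathsf{b}$ contains a bullet. Available entries are ordered by the letter order above, ties broken so that the northmost $\underline{y}$ is least and the westmost $\overline{y}$ is least. Take the least available entry and apply the first applicable slide from the following list (local configurations written row by row, rows separated by "/", "—" meaning a position outside the shifted diagram; bullets swap past entries and a bullet is deleted once no entry lies southeast of it): (1) diagonal slides: [$\bullet\ \bullet$ / $\bullet\ \mathbf{y}$] $\to$ [$\mathbf{y}\ \bullet$ / $\bullet\ \bullet$]; [$\bullet\ \bullet$ / —$\ \mathbf{y}$] $\to$ [$\mathbf{y}\ \bullet$ / —$\ \bullet$]. (2)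 [$\mathbf{x}\ \bullet$ / $\bullet\ \underline{y}$] $\to$ [$\mathbf{x}\ \underline{y}$ / $\bullet\ \bullet$] if $\mathbf{x}\neq\underline{y}$; [$\mathbf{x}\ \bullet$ / $\bullet\ \overline{y}$] $\to$ [$\mathbf{x}\ \bullet$ / $\overline{y}\ \bullet$] if $\mathbf{x}\neq\overline{y}$. (3) [$\mathbf{w}\ \mathbf{x}\ \bullet$ / —$\ \bullet\ \underline{y}$] $\to$ [$\mathbf{w}\ \mathbf{x}\ \bullet$ / —$\ \overline{y}\ \bullet$]; [$\mathbf{x}\ \bullet$ / $\bullet\ \underline{y}$] $\to$ [$\mathbf{x}\ \bullet$ / $\underline{y}\ \bullet$]; [$\mathbf{x}\ \bullet$ / $\bullet\ \overline{y}$] $\to$ [$\mathbf{x}\ \overline{y}$ / $\bullet\ \bullet$]. (4) [$\bullet\ \underline{y}$ / —$\ \overline{y}$] $\to$ [$\overline{y}\ \overline{y}$ / —$\ \bullet$]. (5) [$\bullet\ \mathbf{y}$ / —$\ $(empty)] $\to$ [$\overline{y}\ \bullet$ / —$\ $(empty)]; [$\mathbf{x}\ \bullet$ / —$\ \overline{y}$] $\to$ [$\mathbf{x}\ \underline{y}$ / —$\ \bullet$]; [$\bullet\ \mathbf{y}$] $\to$ [$\mathbf{y}\ \bullet$]; [$\bullet$ / $\mathbf{y}$] $\to$ [$\mathbf{y}$ / $\bullet$]. Repeat with the new least available entry until none is available, giving a tableau of shape $\nu'/\mu'$; then place bullets in the bottom row of $\mu'$ and repeat until a straight shape is reached. *)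

theory Defs
  imports Main
begin

text \<open>Low letters (underlined i) and high letters (overlined i).\<close>
datatype letter = Low nat | High nat

fun lnum :: "letter \<Rightarrow> nat" where
  "lnum (Low i) = i" | "lnum (High i) = i"

fun is_low :: "letter \<Rightarrow> bool" where
  "is_low (Low i) = True" | "is_low (High i) = False"

fun is_high :: "letter \<Rightarrow> bool" where
  "is_high (Low i) = False" | "is_high (High i) = True"

fun lkey :: "letter \<Rightarrow> nat" where
  "lkey (Low i) = 2 * i" | "lkey (High i) = 2 * i + 1"

definition letter_le :: "letter \<Rightarrow> letter \<Rightarrow> bool" where
  "letter_le x y \<longleftrightarrow> lkey x \<le> lkey y"

text \<open>Cells are (row, column), 1-indexed; row i of the shifted diagram of nu
  occupies columns i, ..., i + nu_i - 1.\<close>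

definition strict_partition :: "nat list \<Rightarrow> bool" where
  "strict_partition \<nu> \<longleftrightarrow> sorted_wrt (>) \<nu> \<and> (\<forall>x\<in>set \<nu>. 0 < x)"

definition shifted_diagram :: "nat list \<Rightarrow> (nat \<times> nat) set" where
  "shifted_diagram \<nu> =
     {(i, j). 1 \<le> i \<and> i \<le> length \<nu> \<and> i \<le> j \<and> j < i + \<nu> ! (i - 1)}"

definition skew_cells :: "nat list \<Rightarrow> nat list \<Rightarrow> (nat \<times> nat) set" where
  "skew_cells \<nu> \<mu> = shifted_diagram \<nu> - shifted_diagram \<mu>"

text \<open>A shifted semistandard tableau of skew shape nu/mu: the filling is given by
  T on the cells of nu/mu (values elsewhere are irrelevant).\<close>
definition shifted_sst :: "nat list \<Rightarrow> nat list \<Rightarrow> (nat \<times> nat \<Rightarrow> letter) \<Rightarrow> bool" where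
  "shifted_sst \<nu> \<mu> T \<longleftrightarrow>
     (\<forall>p\<in>skew_cells \<nu> \<mu>. 0 < lnum (T p)) \<and>
     (\<forall>i j j'. (i, j) \<in> skew_cells \<nu> \<mu> \<longrightarrow> (i, j') \<in> skew_cells \<nu> \<mu> \<longrightarrow> j < j'
         \<longrightarrow> letter_le (T (i, j)) (T (i, j'))) \<and>
     (\<forall>i i' j. (i, j) \<in> skew_cells \<nu> \<mu> \<longrightarrow> (i', j) \<in> skew_cells \<nu> \<mu> \<longrightarrow> i < i'
         \<longrightarrow> letter_le (T (i, j)) (T (i', j))) \<and>
     (\<forall>i. (i, i) \<in> skew_cells \<nu> \<mu> \<longrightarrow> \<not> is_low (T (i, i))) \<and>
     (\<forall>i i' j k. (i, j) \<in> skew_cells \<nu> \<mu> \<longrightarrow> (i', j) \<in> skew_cells \<nu> \<mu> \<longrightarrow> i \<noteq> i'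
         \<longrightarrow> \<not> (T (i, j) = High k \<and> T (i', j) = High k)) \<and>
     (\<forall>i j j' k. (i, j) \<in> skew_cells \<nu> \<mu> \<longrightarrow> (i, j') \<in> skew_cells \<nu> \<mu> \<longrightarrow> j \<noteq> j'
         \<longrightarrow> \<not> (T (i, j) = Low k \<and> T (i, j') = Low k))"

text \<open>A state assigns to each position either nothing (not a cell of the current
  diagram), an inner (empty) cell of the current inner shape, a bullet, or an entry.\<close>
datatype content = Ent letter | Bul | Inn

type_synonym state = "nat \<times> nat \<Rightarrow> content option"

definition is_bul :: "state \<Rightarrow> nat \<times> nat \<Rightarrow> bool" where
  "is_bul s p \<longleftrightarrow> s p = Some Bul"

text \<open>A position outside the shifted diagram (strictly below the diagonal).\<close>
definition outside :: "nat \<times> nat \<Rightarrow> bool" where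
  "outside p \<longleftrightarrow> snd p < fst p"

definition clean :: "state \<Rightarrow> state" where
  "clean s = (\<lambda>p. if s p = Some Bul \<and>
       \<not> (\<exists>q y. q \<noteq> p \<and> fst p \<le> fst q \<and> snd p \<le> snd q \<and> s q = Some (Ent y))
     then None else s p)"

definition place_bullets :: "state \<Rightarrow> state" where
  "place_bullets s = clean (\<lambda>p. if s p = Some Inn \<and> (\<forall>q. s q = Some Inn \<longrightarrow> fst q \<le> fst p)
                               then Some Bul else s p)"

definition init_state :: "nat list \<Rightarrow> nat list \<Rightarrow> (nat \<times> nat \<Rightarrow> letter) \<Rightarrow> state" where
  "init_state \<nu> \<mu> T = place_bullets (\<lambda>p.
      if p \<in> shifted_diagram \<mu> then Some Inn
      else if p \<in> shifted_diagram \<nu> then Some (Ent (T p)) else None)"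

definition avail :: "state \<Rightarrow> nat \<times> nat \<Rightarrow> letter \<Rightarrow> bool" where
  "avail s p y \<longleftrightarrow> s p = Some (Ent y) \<and>
     (is_bul s (fst p - 1, snd p) \<or> is_bul s (fst p, snd p - 1))"

definition least_avail :: "state \<Rightarrow> nat \<times> nat \<Rightarrow> letter \<Rightarrow> bool" where
  "least_avail s p y \<longleftrightarrow> avail s p y \<and>
     (\<forall>q z. avail s q z \<longrightarrow>
        lkey y < lkey z \<or>
        (lkey y = lkey z \<and> (is_low y \<longrightarrow> fst p \<le> fst q) \<and> (is_high y \<longrightarrow> snd p \<le> snd q)))"

definition slide :: "state \<Rightarrow> nat \<times> nat \<Rightarrow> letter \<Rightarrow> state option" where
  "slide s p y = (let r = fst p; c = snd p;
      N = (r - 1, c); W = (r, c - 1); NW = (r - 1, c - 1); S = (r + 1, c);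
      entNW = (\<exists>x. s NW = Some (Ent x));
      entNW_ne = (\<exists>x. s NW = Some (Ent x) \<and> x \<noteq> y);
      entNW_eq = (\<exists>x. s NW = Some (Ent x) \<and> x = y) in
    \<comment> \<open>(1) diagonal slides\<close>
    if is_bul s NW \<and> is_bul s N \<and> is_bul s W then
      Some (s(NW := Some (Ent y), N := Some Bul, W := Some Bul, p := Some Bul))
    else if is_bul s NW \<and> is_bul s N \<and> outside W then
      Some (s(NW := Some (Ent y), p := Some Bul))
    \<comment> \<open>(2)\<close>
    else if entNW_ne \<and> is_bul s N \<and> is_bul s W \<and> is_low y then
      Some (s(N := Some (Ent y), p := Some Bul))
    else if entNW_ne \<and> is_bul s N \<and> is_bul s W \<and> is_high y then
      Some (s(W := Some (Ent y), p := Some Bul))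
    \<comment> \<open>(3)\<close>
    else if (\<exists>w. s (r - 1, c - 2) = Some (Ent w)) \<and> entNW \<and> is_bul s N
            \<and> outside (r, c - 2) \<and> is_bul s W \<and> is_low y then
      Some (s(W := Some (Ent (High (lnum y))), p := Some Bul))
    else if entNW \<and> is_bul s N \<and> is_bul s W \<and> is_low y then
      Some (s(W := Some (Ent y), p := Some Bul))
    else if entNW \<and> is_bul s N \<and> is_bul s W \<and> is_high y then
      Some (s(N := Some (Ent y), p := Some Bul))
    \<comment> \<open>(4)\<close>
    else if is_bul s W \<and> is_low y \<and> outside (r + 1, c - 1)
            \<and> s S = Some (Ent (High (lnum y))) then
      Some (s(W := Some (Ent (High (lnum y))), p := Some (Ent (High (lnum y))), S := Some Bul))
    \<comment> \<open>(5)\<close>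
    else if is_bul s W \<and> outside (r + 1, c - 1) then
      Some (s(W := Some (Ent (High (lnum y))), p := Some Bul))
    else if entNW \<and> is_bul s N \<and> outside W \<and> is_high y then
      Some (s(N := Some (Ent (Low (lnum y))), p := Some Bul))
    else if is_bul s W then
      Some (s(W := Some (Ent y), p := Some Bul))
    else if is_bul s N then
      Some (s(N := Some (Ent y), p := Some Bul))
    else None)"

inductive mixed_rect_state ::
  "nat list \<Rightarrow> nat list \<Rightarrow> (nat \<times> nat \<Rightarrow> letter) \<Rightarrow> state \<Rightarrow> bool"
  for \<nu> \<mu> T where
  init: "mixed_rect_state \<nu> \<mu> T (init_state \<nu> \<mu> T)"
| slide_step: "mixed_rect_state \<nu> \<mu> T s \<Longrightarrow> least_avail s p y \<Longrightarrow> slide s p y = Some s'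
     \<Longrightarrow> mixed_rect_state \<nu> \<mu> T (clean s')"
| new_round: "mixed_rect_state \<nu> \<mu> T s \<Longrightarrow> (\<forall>p y. \<not> avail s p y) \<Longrightarrow> (\<forall>p. \<not> is_bul s p)
     \<Longrightarrow> mixed_rect_state \<nu> \<mu> T (place_bullets s)"

end

theory Submission
  imports Defs
begin

definition invD :: "state \<Rightarrow> bool" where
 "invD s \<longleftrightarrow> (\<forall>a b. s (a,b) \<noteq> None \<longrightarrow> 1 \<le> a \<and> a \<le> b)"
definition invM :: "state \<Rightarrow> bool" where
 "invM s \<longleftrightarrow> (\<forall>i y. s (i,i) \<noteq> Some (Ent (Low y)))"
definition invN :: "state \<Rightarrow> bool" where
 "invN s \<longleftrightarrow> (\<forall>a b c d y. s (a,b) = None \<longrightarrow> 1 \<le> a \<longrightarrow> a \<le> b \<longrightarrow> a \<le> c \<longrightarrow> b \<le> d \<longrightarrow> s (c,d) \<noteq> Some (Ent y))"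
definition invJ :: "state \<Rightarrow> bool" where
 "invJ s \<longleftrightarrow> (\<forall>i j. s (i,j) = Some Inn \<longrightarrow> 2 \<le> i \<longrightarrow> s (i-1,j) = Some Inn)"
definition invI2 :: "state \<Rightarrow> bool" where
 "invI2 s \<longleftrightarrow> (\<forall>i. s (i,i) = Some Inn \<longrightarrow> s (Suc i, Suc i) = Some Bul \<longrightarrow> s (i, Suc i) = Some Inn)"
definition invI3 :: "state \<Rightarrow> bool" where
 "invI3 s \<longleftrightarrow> (\<forall>i j. s (i,j) = Some Inn \<longrightarrow> s (i, Suc j) \<noteq> Some Bul)"


lemma slide_cases:
  assumes "slide s (r,c) y = Some s'"
  shows "(is_bul s (r-1,c-1) \<and> is_bul s (r-1,c) \<and> is_bul s (r,c-1) \<and>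
          s' = s((r-1,c-1) := Some (Ent y), (r-1,c) := Some Bul, (r,c-1) := Some Bul, (r,c) := Some Bul))
   \<or> (is_bul s (r-1,c-1) \<and> is_bul s (r-1,c) \<and> c - 1 < r \<and>
          s' = s((r-1,c-1) := Some (Ent y), (r,c) := Some Bul))
   \<or> ((\<exists>x. s (r-1,c-1) = Some (Ent x) \<and> x \<noteq> y) \<and> is_bul s (r-1,c) \<and> is_bul s (r,c-1) \<and> is_low y \<and>
          s' = s((r-1,c) := Some (Ent y), (r,c) := Some Bul))
   \<or> (is_bul s (r,c-1) \<and> is_high y \<and>
          s' = s((r,c-1) := Some (Ent y), (r,c) := Some Bul))
   \<or> (is_bul s (r,c-1) \<and>
          s' = s((r,c-1) := Some (Ent (High (lnum y))), (r,c) := Some Bul))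
   \<or> ((\<exists>x. s (r-1,c-1) = Some (Ent x)) \<and> is_bul s (r-1,c) \<and> is_bul s (r,c-1) \<and> is_low y \<and>
        \<not> (\<exists>x. s (r-1,c-1) = Some (Ent x) \<and> x \<noteq> y) \<and>
        \<not> ((\<exists>w. s (r - 1, c - 2) = Some (Ent w)) \<and> c - 2 < r) \<and>
          s' = s((r,c-1) := Some (Ent y), (r,c) := Some Bul))
   \<or> (is_bul s (r-1,c) \<and> is_high y \<and>
          s' = s((r-1,c) := Some (Ent y), (r,c) := Some Bul))
   \<or> (is_bul s (r,c-1) \<and> is_low y \<and> c - 1 < r + 1 \<and> s (r+1,c) = Some (Ent (High (lnum y))) \<and>
          s' = s((r,c-1) := Some (Ent (High (lnum y))), (r,c) := Some (Ent (High (lnum y))), (r+1,c) := Some Bul))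
   \<or> ((\<exists>x. s (r-1,c-1) = Some (Ent x)) \<and> is_bul s (r-1,c) \<and> c - 1 < r \<and>
          s' = s((r-1,c) := Some (Ent (Low (lnum y))), (r,c) := Some Bul))
   \<or> (is_bul s (r,c-1) \<and> \<not> (c - 1 < r + 1) \<and>
          s' = s((r,c-1) := Some (Ent y), (r,c) := Some Bul))
   \<or> (is_bul s (r-1,c) \<and>
          s' = s((r-1,c) := Some (Ent y), (r,c) := Some Bul))"
  using assms unfolding slide_def Let_def outside_def fst_conv snd_conv
  apply (simp only: split: if_split_asm)
  apply (simp_all only: option.inject)
  apply (simp_all)
  done


lemma invD_dest: "invD s \<Longrightarrow> s (a,b) = Some z \<Longrightarrow> 1 \<le> a \<and> a \<le> b"
  unfolding invD_def by blast

lemma slide_D: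
  assumes "invD s" "s (r,c) = Some (Ent y)" "slide s (r,c) y = Some s'"
  shows "invD s'"
  using slide_cases[OF assms(3)] 
proof (elim disjE conjE exE)
qed (use assms(1,2) in \<open>auto simp: invD_def is_bul_def\<close>)

lemma slide_M:
  assumes "invD s" "invM s" "invN s" "invI2 s" "s (r,c) = Some (Ent y)" 
    "least_avail s (r,c) y" "slide s (r,c) y = Some s'"
  shows "invM s'"
proof -
  have rc: "1 \<le> r" "r \<le> c" using invD_dest[OF assms(1,5)] by auto
  have F1: "\<not> is_low y" if "s (r-1,c-1) = Some Bul" "r - 1 = c - 1"
  proof -
    have "1 \<le> r - 1" using invD_dest[OF assms(1) that(1)] by auto
    then have "r = c" using that(2) by arith
    then show ?thesis using assms(2,5) unfolding invM_def by (cases y) auto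
  qed
  have F2: "c - 1 \<noteq> r" if "s (r-1,c-1) = Some (Ent x)" "s (r-1,c) = Some Bul" "s (r,c-1) = Some Bul"
     "is_low y" "\<not>(\<exists>x. s(r-1,c-1) = Some (Ent x) \<and> x \<noteq> y)"
     "\<not>((\<exists>w. s(r-1,c-2) = Some (Ent w)) \<and> c-2 < r)" for x
  proof
    assume cr: "c - 1 = r"
    have r2: "2 \<le> r" using invD_dest[OF assms(1) that(2)] cr by auto
    have xy: "x = y" using that(1,5) by auto
    have c2: "c - 2 < r" using cr r2 by arith
    have NW: "s (r-1, r) = Some (Ent y)" using that(1) xy cr by simp
    have Wb: "s (r, r) = Some Bul" using that(3) cr by simp
    have "c - 2 = r - 1" using cr by arith
    then have ne: "\<forall>w. s (r-1, r-1) \<noteq> Some (Ent w)" using that(6) c2 by auto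
    show False
    proof (cases "s (r-1,r-1)")
      case None
      then show ?thesis using assms(3) NW r2 unfolding invN_def by fastforce
    next
      case (Some z)
      then show ?thesis
      proof (cases z)
        case (Ent w) then show ?thesis using ne Some by simp
      next
        case Bul
        have "avail s (r-1, r) y" unfolding avail_def is_bul_def using NW Some Bul by simp
        then have "lkey y < lkey y \<or> (lkey y = lkey y \<and> (is_low y \<longrightarrow> r \<le> r - 1))"
          using assms(6) unfolding least_avail_def by fastforce
        then show ?thesis using that(4) r2 by auto
      next
        case Inn
        have sr: "Suc (r-1) = r" using r2 by arith
        have "s (r-1, Suc (r-1)) = Some Inn" using assms(4) Some Inn Wb sr
          unfolding invI2_def by metis
        then show ?thesis using NW sr by simp
      qed
    qed
  qed
  show ?thesis
  using slide_cases[OF assms(7)] 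
    apply (elim disjE conjE exE)
    subgoal using assms(2) F1 by (auto simp: invM_def is_bul_def)
    subgoal using assms(2) F1 by (auto simp: invM_def is_bul_def)
    subgoal using assms(2) rc by (auto simp: invM_def is_bul_def dest: invD_dest[OF assms(1)])
    subgoal using assms(2) rc by (auto simp: invM_def is_bul_def dest: invD_dest[OF assms(1)])
    subgoal using assms(2) rc by (auto simp: invM_def is_bul_def dest: invD_dest[OF assms(1)])
    subgoal using assms(2) rc F2 by (auto simp: invM_def is_bul_def)
    subgoal using assms(2) rc by (auto simp: invM_def is_bul_def dest: invD_dest[OF assms(1)])
    subgoal using assms(2) rc by (auto simp: invM_def is_bul_def dest: invD_dest[OF assms(1)])
    subgoal using assms(2) rc by (auto simp: invM_def is_bul_def dest: invD_dest[OF assms(1)])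
    subgoal using assms(2) rc by (auto simp: invM_def is_bul_def dest: invD_dest[OF assms(1)])
    subgoal using assms(2) rc by (auto simp: invM_def is_bul_def dest: invD_dest[OF assms(1)])
    done
qed


lemma slide_ent:
  assumes "slide s (r,c) y = Some s'" "s (r,c) = Some (Ent y)" "s' q = Some (Ent z)"
  shows "s q = Some (Ent z) \<or> (fst q \<le> r \<and> snd q \<le> c)"
  using slide_cases[OF assms(1)] assms(2,3)
  apply (elim disjE conjE exE)
  by (auto simp: is_bul_def split: if_splits)

lemma slide_none:
  assumes "slide s (r,c) y = Some s'" "s (r,c) = Some (Ent y)"
  shows "s' q = None \<longleftrightarrow> s q = None"
  using slide_cases[OF assms(1)] assms(2)
  apply (elim disjE conjE exE)
  by (auto simp: is_bul_def split: if_splits)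

lemma slide_inn:
  assumes "slide s (r,c) y = Some s'" "s (r,c) = Some (Ent y)"
  shows "s' q = Some Inn \<longleftrightarrow> s q = Some Inn"
  using slide_cases[OF assms(1)] assms(2)
  apply (elim disjE conjE exE)
  by (auto simp: is_bul_def split: if_splits)

lemma slide_N:
  assumes "invN s" "slide s (r,c) y = Some s'" "s (r,c) = Some (Ent y)"
  shows "invN s'"
  unfolding invN_def
proof (intro allI impI)
  fix a b c' d z assume h: "s' (a,b) = None" "1 \<le> a" "a \<le> b" "a \<le> c'" "b \<le> d"
  then have sn: "s (a,b) = None" using slide_none[OF assms(2,3)] by simp
  show "s' (c',d) \<noteq> Some (Ent z)"
  proof
    assume "s' (c',d) = Some (Ent z)"
    from slide_ent[OF assms(2,3) this] show False
    proof
      assume "s (c',d) = Some (Ent z)" then show False using assms(1) sn h unfolding invN_def by blast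
    next
      assume "fst (c',d) \<le> r \<and> snd (c',d) \<le> c"
      then show False using assms(1,3) sn h unfolding invN_def by (metis fst_conv snd_conv le_trans)
    qed
  qed
qed

lemma slide_J:
  assumes "invJ s" "slide s (r,c) y = Some s'" "s (r,c) = Some (Ent y)"
  shows "invJ s'"
  using assms slide_inn[OF assms(2,3)] unfolding invJ_def by simp


lemma slide_bul:
  assumes "slide s (r,c) y = Some s'" "s (r,c) = Some (Ent y)" "s' q = Some Bul"
  shows "s q = Some Bul \<or> q = (r,c) \<or> (q = (r+1,c) \<and> c - 1 < r + 1 \<and> s (r,c-1) = Some Bul)"
  using slide_cases[OF assms(1)] assms(2,3)
  apply (elim disjE conjE exE)
  by (auto simp: is_bul_def split: if_splits)

lemma W_not_inn:
  assumes "invD s" "invJ s" "invI3 s" "slide s (r,c) y = Some s'" "s (r,c) = Some (Ent y)"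
  shows "s (r,c-1) \<noteq> Some Inn"
proof
  assume W: "s (r,c-1) = Some Inn"
  have H1: False if "s (r-1,c) = Some Bul"
  proof -
    have "2 \<le> r" using invD_dest[OF assms(1) that] invD_dest[OF assms(1) W] by auto
    then have "s (r-1,c-1) = Some Inn" using assms(2) W unfolding invJ_def by auto
    moreover have "Suc (c-1) = c" using invD_dest[OF assms(1) W] by auto
    ultimately show False using assms(3) that unfolding invI3_def by metis
  qed
  have H2: False if "c - 1 < r" using invD_dest[OF assms(1) W] that by auto
  show False
    using slide_cases[OF assms(4)] W
    apply (elim disjE conjE exE)
    by (auto simp: is_bul_def intro: H1 H2)
qed

lemma NW_diag:
  assumes "invD s" "invI3 s" "slide s (r,c) y = Some s'" "s (r,c) = Some (Ent y)"
    "r = c" "s (r-1,c-1) = Some Inn"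
  shows False
proof -
  have r2: "2 \<le> r" using invD_dest[OF assms(1,6)] assms(5) by auto
  have H1: False if "s (r-1,c) = Some Bul"
  proof -
    have "Suc (c-1) = c" using r2 assms(5) by auto
    then show False using assms(2,6) that unfolding invI3_def by metis
  qed
  have H2: False if "s (r,c-1) = Some Bul"
    using invD_dest[OF assms(1) that] assms(5) r2 by auto
  show False
    using slide_cases[OF assms(3)] assms(6)
    apply (elim disjE conjE exE)
    by (auto simp: is_bul_def intro: H1 H2)
qed

lemma slide_I3:
  assumes "invD s" "invJ s" "invI3 s" "slide s (r,c) y = Some s'" "s (r,c) = Some (Ent y)"
  shows "invI3 s'"
  unfolding invI3_def
proof (intro allI impI notI)
  fix i j assume h: "s' (i,j) = Some Inn" "s' (i, Suc j) = Some Bul"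
  have si: "s (i,j) = Some Inn" using h(1) slide_inn[OF assms(4,5)] by simp
  from slide_bul[OF assms(4,5) h(2)] show False
  proof (elim disjE conjE)
    assume "s (i, Suc j) = Some Bul" then show False using assms(3) si unfolding invI3_def by blast
  next
    assume "(i, Suc j) = (r,c)"
    then have "i = r" "j = c - 1" by auto
    then show False using W_not_inn[OF assms] si by simp
  next
    assume "(i, Suc j) = (r+1,c)" "c - 1 < r + 1"
    then have "i = r+1" "j = c - 1" by auto
    then show False using invD_dest[OF assms(1) si] \<open>c - 1 < r + 1\<close> by auto
  qed
qed

lemma slide_I2:
  assumes "invD s" "invI2 s" "invI3 s" "slide s (r,c) y = Some s'" "s (r,c) = Some (Ent y)"
  shows "invI2 s'"
  unfolding invI2_def
proof (intro allI impI)
  fix i assume h: "s' (i,i) = Some Inn" "s' (Suc i, Suc i) = Some Bul"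
  have si: "s (i,i) = Some Inn" using h(1) slide_inn[OF assms(4,5)] by simp
  have "s (i, Suc i) = Some Inn"
  using slide_bul[OF assms(4,5) h(2)]
  proof (elim disjE conjE)
    assume "s (Suc i, Suc i) = Some Bul" then show ?thesis using assms(2) si unfolding invI2_def by blast
  next
    assume "(Suc i, Suc i) = (r,c)"
    then have "r = c" "i = r - 1" "i = c - 1" by auto
    then show ?thesis using NW_diag[OF assms(1,3,4,5)] si by simp
  next
    assume "(Suc i, Suc i) = (r+1,c)" "s (r,c-1) = Some Bul"
    then show ?thesis using si by auto
  qed
  then show "s' (i, Suc i) = Some Inn" using slide_inn[OF assms(4,5)] by simp
qed


definition invAll :: "state \<Rightarrow> bool" where
  "invAll s \<longleftrightarrow> invD s \<and> invM s \<and> invN s \<and> invJ s \<and> invI2 s \<and> invI3 s"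

lemma slide_All:
  assumes "invAll s" "least_avail s p y" "slide s p y = Some s'"
  shows "invAll s'"
proof -
  obtain r c where p: "p = (r,c)" by (cases p)
  have e: "s (r,c) = Some (Ent y)" using assms(2) p unfolding least_avail_def avail_def by simp
  have sl: "slide s (r,c) y = Some s'" using assms(3) p by simp
  have la: "least_avail s (r,c) y" using assms(2) p by simp
  show ?thesis using assms(1) unfolding invAll_def
    using slide_D[OF _ e sl] slide_M[OF _ _ _ _ e la sl] slide_N[OF _ sl e] slide_J[OF _ sl e]
      slide_I2[OF _ _ _ sl e] slide_I3[OF _ _ _ sl e] by blast
qed

lemma clean_some: "clean s q = Some z \<Longrightarrow> s q = Some z"
  unfolding clean_def by (auto split: if_splits)

lemma clean_ent: "clean s q = Some (Ent z) \<longleftrightarrow> s q = Some (Ent z)"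
  unfolding clean_def by (auto split: if_splits)

lemma clean_inn: "clean s q = Some Inn \<longleftrightarrow> s q = Some Inn"
  unfolding clean_def by (auto split: if_splits)

lemma clean_All:
  assumes "invAll s" shows "invAll (clean s)"
proof -
  have D: "invD (clean s)" using assms clean_some unfolding invAll_def invD_def by blast
  have M: "invM (clean s)" using assms clean_ent unfolding invAll_def invM_def by metis
  have J: "invJ (clean s)" using assms clean_inn unfolding invAll_def invJ_def by metis
  have I2: "invI2 (clean s)" using assms clean_inn clean_some unfolding invAll_def invI2_def by metis
  have I3: "invI3 (clean s)" using assms clean_inn clean_some unfolding invAll_def invI3_def by metis
  have N: "invN (clean s)" unfolding invN_def
  proof (intro allI impI notI)
    fix a b c d y assume h: "clean s (a,b) = None" "1 \<le> a" "a \<le> b" "a \<le> c" "b \<le> d"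
      "clean s (c,d) = Some (Ent y)"
    have e: "s (c,d) = Some (Ent y)" using h(6) clean_ent by metis
    show False
    proof (cases "s (a,b) = None")
      case True then show False using assms h e unfolding invAll_def invN_def by blast
    next
      case False
      then have "s (a,b) = Some Bul \<and> \<not> (\<exists>q y. q \<noteq> (a,b) \<and> a \<le> fst q \<and> b \<le> snd q \<and> s q = Some (Ent y))"
        using h(1) unfolding clean_def by (auto split: if_splits)
      moreover have "(c,d) \<noteq> (a,b)" using calculation e by auto
      ultimately show False using e h(4,5) by auto
    qed
  qed
  show ?thesis using D M N J I2 I3 unfolding invAll_def by blast
qed

lemma place_All:
  assumes "invAll s" "\<forall>q. s q \<noteq> Some Bul"
  shows "invAll (place_bullets s)"
proof -
  define P where "P p \<longleftrightarrow> s p = Some Inn \<and> (\<forall>q. s q = Some Inn \<longrightarrow> fst q \<le> fst p)" for p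
  define s1 where "s1 = (\<lambda>p. if P p then Some Bul else s p)"
  have pb: "place_bullets s = clean s1" unfolding place_bullets_def s1_def P_def by simp
  have s1i: "s1 q = Some Inn \<longleftrightarrow> s q = Some Inn \<and> (\<exists>q'. s q' = Some Inn \<and> fst q < fst q')" for q
    unfolding s1_def P_def by (auto simp: not_le)
  have s1b: "s1 q = Some Bul \<longleftrightarrow> P q" for q
    unfolding s1_def using assms(2) by (cases q) auto
  have s1e: "s1 q = Some (Ent z) \<longleftrightarrow> s q = Some (Ent z)" for q z
    unfolding s1_def P_def by auto
  have s1n: "s1 q = None \<longleftrightarrow> s q = None" for q
    unfolding s1_def P_def by auto
  have D: "invD s1" using assms(1) s1n unfolding invAll_def invD_def by metis
  have M: "invM s1" using assms(1) s1e unfolding invAll_def invM_def by metis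
  have N: "invN s1" using assms(1) s1e s1n unfolding invAll_def invN_def by metis
  have J: "invJ s1" unfolding invJ_def
  proof (intro allI impI)
    fix i j assume h: "s1 (i,j) = Some Inn" "2 \<le> i"
    then obtain q' where "s (i,j) = Some Inn" "s q' = Some Inn" "i < fst q'" using s1i by auto
    moreover have "s (i-1,j) = Some Inn" using assms(1) h(2) calculation(1) unfolding invAll_def invJ_def by blast
    ultimately show "s1 (i-1,j) = Some Inn" using s1i h(2) by fastforce
  qed
  have I2: "invI2 s1" unfolding invI2_def
  proof (intro allI impI)
    fix i assume h: "s1 (i,i) = Some Inn" "s1 (Suc i, Suc i) = Some Bul"
    have "P (Suc i, Suc i)" using h(2) s1b by blast
    then have a: "s (Suc i, Suc i) = Some Inn" unfolding P_def by simp
    have "s (i,i) = Some Inn" using h(1) s1i by blast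
    then have "1 \<le> i" using assms(1) invD_dest unfolding invAll_def by blast
    then have "2 \<le> Suc i" by simp
    then have "s (Suc i - 1, Suc i) = Some Inn" using assms(1) a unfolding invAll_def invJ_def by blast
    then have "s (i, Suc i) = Some Inn" by simp
    then show "s1 (i, Suc i) = Some Inn" using s1i a by fastforce
  qed
  have I3: "invI3 s1" unfolding invI3_def
  proof (intro allI impI notI)
    fix i j assume h: "s1 (i,j) = Some Inn" "s1 (i, Suc j) = Some Bul"
    then obtain q' where "s q' = Some Inn" "i < fst q'" using s1i by auto
    moreover have "P (i, Suc j)" using h(2) s1b by blast
    ultimately show False unfolding P_def by fastforce
  qed
  have "invAll s1" using D M N J I2 I3 unfolding invAll_def by blast
  then show ?thesis using pb clean_All by simp
qed


lemma strict_gap: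
  assumes "sorted_wrt (>) \<nu>" "i \<le> j" "j < length \<nu>"
  shows "\<nu> ! j + (j - i) \<le> \<nu> ! i"
  using assms(2,3)
proof (induction j)
  case 0 then show ?case by simp
next
  case (Suc j)
  show ?case
  proof (cases "i = Suc j")
    case True then show ?thesis by simp
  next
    case False
    then have "i \<le> j" using Suc.prems by simp
    then have "\<nu> ! j + (j - i) \<le> \<nu> ! i" using Suc by simp
    moreover have "\<nu> ! Suc j < \<nu> ! j" using assms(1) Suc.prems sorted_wrt_nth_less by fastforce
    ultimately show ?thesis using \<open>i \<le> j\<close> by simp
  qed
qed

lemma shifted_closed:
  assumes "strict_partition \<nu>" "(c,d) \<in> shifted_diagram \<nu>" "1 \<le> a" "a \<le> b" "a \<le> c" "b \<le> d"
  shows "(a,b) \<in> shifted_diagram \<nu>"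
proof -
  have c: "1 \<le> c" "c \<le> length \<nu>" "c \<le> d" "d < c + \<nu> ! (c-1)" using assms(2) unfolding shifted_diagram_def by auto
  have "\<nu> ! (c-1) + ((c-1) - (a-1)) \<le> \<nu> ! (a-1)"
    using strict_gap[of \<nu> "a-1" "c-1"] assms(1,3,5) c unfolding strict_partition_def by auto
  then have "b < a + \<nu> ! (a-1)" using c assms(3,5,6) by linarith
  then show ?thesis using assms c unfolding shifted_diagram_def by auto
qed

lemma init_All:
  assumes "strict_partition \<nu>" "strict_partition \<mu>" "shifted_sst \<nu> \<mu> T"
  shows "invAll (init_state \<nu> \<mu> T)"
proof -
  define s0 where "s0 = (\<lambda>p. if p \<in> shifted_diagram \<mu> then Some Inn
      else if p \<in> shifted_diagram \<nu> then Some (Ent (T p)) else None)"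
  have D: "invD s0" unfolding invD_def s0_def shifted_diagram_def by auto
  have M: "invM s0" unfolding invM_def
  proof (intro allI notI)
    fix i y assume h: "s0 (i,i) = Some (Ent (Low y))"
    then have "(i,i) \<in> skew_cells \<nu> \<mu>" "T (i,i) = Low y" unfolding s0_def skew_cells_def by (auto split: if_splits)
    then show False using assms(3) unfolding shifted_sst_def by fastforce
  qed
  have N: "invN s0" unfolding invN_def
  proof (intro allI impI notI)
    fix a b c d y assume h: "s0 (a,b) = None" "1 \<le> a" "a \<le> b" "a \<le> c" "b \<le> d" "s0 (c,d) = Some (Ent y)"
    then have "(c,d) \<in> shifted_diagram \<nu>" "(a,b) \<notin> shifted_diagram \<nu>" unfolding s0_def by (auto split: if_splits)
    then show False using shifted_closed[OF assms(1)] h by blast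
  qed
  have J: "invJ s0" unfolding invJ_def
  proof (intro allI impI)
    fix i j assume h: "s0 (i,j) = Some Inn" "2 \<le> i"
    then have m: "(i,j) \<in> shifted_diagram \<mu>" unfolding s0_def by (auto split: if_splits)
    then have "i \<le> j" unfolding shifted_diagram_def by auto
    then have "(i-1,j) \<in> shifted_diagram \<mu>" using shifted_closed[OF assms(2) m] h(2) by auto
    then show "s0 (i-1,j) = Some Inn" unfolding s0_def by simp
  qed
  have nb: "\<forall>q. s0 q \<noteq> Some Bul" unfolding s0_def by auto
  have I2: "invI2 s0" using nb unfolding invI2_def by blast
  have I3: "invI3 s0" using nb unfolding invI3_def by blast
  have "invAll s0" using D M N J I2 I3 unfolding invAll_def by blast
  then show ?thesis using place_All[OF _ nb] unfolding init_state_def s0_def by simp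
qed

lemma rect_All:
  assumes "strict_partition \<nu>" "strict_partition \<mu>" "shifted_sst \<nu> \<mu> T"
    and "mixed_rect_state \<nu> \<mu> T s"
  shows "invAll s"
  using assms(4)
proof (induction rule: mixed_rect_state.induct)
  case init then show ?case using init_All[OF assms(1-3)] .
next
  case (slide_step s p y s') then show ?case using slide_All clean_All by blast
next
  case (new_round s) then show ?case using place_All unfolding is_bul_def by blast
qed

theorem lemma3p3:
  assumes "strict_partition \<nu>" and "strict_partition \<mu>"
    and "shifted_diagram \<mu> \<subseteq> shifted_diagram \<nu>"
    and "shifted_sst \<nu> \<mu> T"
    and "mixed_rect_state \<nu> \<mu> T s"
  shows "\<forall>i y. s (i, i) \<noteq> Some (Ent (Low y))"
  using rect_All[OF assms(1,2,4,5)] unfolding invAll_def invM_def by blast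

end
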